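(* For $\lambda=(\lambda_1,\dots,\lambda_l)\in\mathscr{P}^n_C$ (with $l\ge1$), writing $x_\lambda=v(\lambda)t_{-\xi(\lambda)}$ with $v(\lambda)\in W$, $\xi(\lambda)\in Q^\vee$, we have $$v(\lambda)=v_{\lambda_l}\cdots v_{\lambda_2}v_{\lambda_1},\qquad \xi(\lambda)=\varepsilon_1+v_{\lambda_1}^{-1}\varepsilon_1+v_{\lambda_1}^{-1}v_{\lambda_2}^{-1}\varepsilon_1+\cdots+v_{\lambda_1}^{-1}\cdots v_{\lambda_{l-1}}^{-1}\varepsilon_1.$$
   Context: $W_{\mathrm{af}}$ is the affine Weyl group of type $C_n^{(1)}$ generated by $s_0,\dots,s_n$; $W=\langle s_1,\dots,s_n\rangle$ acts on $X^\vee=\bigoplus_{i=1}^n\mathbb{Z}\varepsilon_i$ by: $s_i$ ($1\le i\le n-1$) swaps $\varepsilon_i,\varepsilon_{i+1}$; $s_n$ negates $\varepsilon_n$. $Q^\vee=\bigoplus\mathbb{Z}\alpha_i^\vee$, $\alpha_i^\vee=\varepsilon_i-\varepsilon_{i+1}$ ($i<n$), $\alpha_n^\vee=\varepsilon_n$. $W_{\mathrm{af}}\cong W\ltimes Q^\vee$, elements $wt_\xi$ with $wt_\xi w^{-1}=t_{w\xi}$, and $s_0=s_\theta t_{-\varepsilon_1}$ where $s_\theta=s_1\cdots s_{n-1}s_ns_{n-1}\cdots s_1$. Define $\rho_i=s_{i-1}\cdots s_1s_0$ ($1\le i\le n$), $\rho_i=s_{2n-i+1}\cdots s_{n-1}s_ns_{n-1}\cdots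 s_1s_0$ ($n+1\le i\le 2n$); $v_i=s_i\cdots s_{n-1}s_ns_{n-1}\cdots s_1$ ($1\le i\le n$), $v_i=s_{2n-i}\cdots s_2s_1$ ($n+1\le i\le 2n-1$), $v_{2n}=1$. $\mathscr{P}^n_C$ is the set of partitions $\lambda=(\lambda_1\ge\dots\ge\lambda_l>0)$ with $\lambda_1\le 2n$ such that $\lambda_k<n\Rightarrow\lambda_k>\lambda_{k+1}$ (with $\lambda_{l+1}=0$), and $x_\lambda=\rho_{\lambda_l}\cdots\rho_{\lambda_1}$. *)

theory Defs
  imports Main "HOL-Library.Function_Algebras"
begin

text \<open>Elements of the coweight lattice X^vee = Z^n are represented as functions
  nat => int, coordinate i (1 <= i <= n) being the coefficient of eps_i.
  Elements of the affine Weyl group are represented faithfully by the affine maps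
  they induce: w t_xi acts as x |-> w (x + xi).\<close>

type_synonym vec = "nat \<Rightarrow> int"

definition eps :: "nat \<Rightarrow> vec" where
  "eps i = (\<lambda>j. if j = i then 1 else 0)"

definition transl :: "vec \<Rightarrow> vec \<Rightarrow> vec" where
  "transl \<xi> = (\<lambda>x. x + \<xi>)"

definition sW :: "nat \<Rightarrow> nat \<Rightarrow> vec \<Rightarrow> vec" where
  "sW n i = (if 1 \<le> i \<and> i < n then
               (\<lambda>x j. if j = i then x (i+1) else if j = i + 1 then x i else x j)
             else if i = n then (\<lambda>x j. if j = n then - x j else x j)
             else id)"

definition wordW :: "nat \<Rightarrow> nat list \<Rightarrow> vec \<Rightarrow> vec" where
  "wordW n is = foldr (\<circ>) (map (sW n) is) id"

definition s_theta :: "nat \<Rightarrow> vec \<Rightarrow> vec" where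
  "s_theta n = wordW n ([1..<n] @ [n] @ rev [1..<n])"

definition saf :: "nat \<Rightarrow> nat \<Rightarrow> vec \<Rightarrow> vec" where
  "saf n i = (if i = 0 then s_theta n \<circ> transl (- eps 1) else sW n i)"

definition wordAf :: "nat \<Rightarrow> nat list \<Rightarrow> vec \<Rightarrow> vec" where
  "wordAf n is = foldr (\<circ>) (map (saf n) is) id"

definition rho :: "nat \<Rightarrow> nat \<Rightarrow> vec \<Rightarrow> vec" where
  "rho n i = (if i \<le> n then wordAf n (rev [1..<i] @ [0])
              else wordAf n ([2*n-i+1..<n] @ [n] @ rev [1..<n] @ [0]))"

definition vv :: "nat \<Rightarrow> nat \<Rightarrow> vec \<Rightarrow> vec" where
  "vv n i = (if i \<le> n then wordW n ([i..<n] @ [n] @ rev [1..<n])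
             else if i < 2*n then wordW n (rev [1..<2*n-i+1])
             else id)"

definition PC :: "nat \<Rightarrow> nat list \<Rightarrow> bool" where
  "PC n lam \<longleftrightarrow>
     (\<forall>k < length lam. 0 < lam ! k \<and> lam ! k \<le> 2*n) \<and>
     (\<forall>k. k + 1 < length lam \<longrightarrow> lam ! (k+1) \<le> lam ! k) \<and>
     (\<forall>k < length lam. lam ! k < n \<longrightarrow>
         lam ! k > (if k + 1 < length lam then lam ! (k+1) else 0))"

definition xlam :: "nat \<Rightarrow> nat list \<Rightarrow> vec \<Rightarrow> vec" where
  "xlam n lam = foldr (\<circ>) (map (rho n) (rev lam)) id"

end

theory Submission
  imports Defs
begin

lemma sW_invol: "1 \<le> n \<Longrightarrow> sW n i (sW n i x) = x"
  unfolding sW_def by (auto simp: fun_eq_iff)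

lemma sW_add: "sW n i (x + y) = sW n i x + sW n i y"
  unfolding sW_def by (auto simp: fun_eq_iff)

lemma wordW_Nil[simp]: "wordW n [] = id" by (simp add: wordW_def)
lemma wordW_Cons[simp]: "wordW n (i # is) = sW n i \<circ> wordW n is" by (simp add: wordW_def)
lemma wordW_append: "wordW n (xs @ ys) = wordW n xs \<circ> wordW n ys"
  by (induction xs) auto

lemma wordW_cancel: "1 \<le> n \<Longrightarrow> wordW n (rev xs) \<circ> wordW n xs = id"
proof (induction xs)
  case (Cons a xs)
  have "wordW n (rev (a#xs)) \<circ> wordW n (a#xs) = wordW n (rev xs) \<circ> (sW n a \<circ> sW n a) \<circ> wordW n xs"
    by (simp add: wordW_append comp_assoc)
  also have "sW n a \<circ> sW n a = id" using Cons.prems by (simp add: fun_eq_iff sW_invol)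
  finally show ?case using Cons by simp
qed simp

lemma wordW_cancel2: "1 \<le> n \<Longrightarrow> wordW n xs \<circ> wordW n (rev xs) = id"
  using wordW_cancel[of n "rev xs"] by simp

lemma wordW_add: "wordW n xs (x + y) = wordW n xs x + wordW n xs y"
  by (induction xs arbitrary: x y) (auto simp: sW_add)

lemma wordAf_W: "0 \<notin> set xs \<Longrightarrow> wordAf n xs = wordW n xs"
  by (induction xs) (auto simp: wordAf_def wordW_def saf_def)

lemma wordAf_append: "wordAf n (xs @ ys) = wordAf n xs \<circ> wordAf n ys"
  by (induction xs) (auto simp: wordAf_def)

lemma wordAf_0: "wordAf n [0] = s_theta n \<circ> transl (- eps 1)"
  by (simp add: wordAf_def saf_def)

lemma rho_eq:
  assumes n: "1 \<le> n" and a: "1 \<le> a" "a \<le> 2*n"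
  shows "rho n a = vv n a \<circ> transl (- eps 1)"
proof (cases "a \<le> n")
  case True
  define C where "C = [a..<n] @ [n] @ rev [1..<n]"
  have up: "[1..<n] = [1..<a] @ [a..<n]" using True a
    by (metis le_add_diff_inverse upt_add_eq_append)
  have st: "s_theta n = wordW n [1..<a] \<circ> wordW n C"
    unfolding s_theta_def C_def by (subst up) (simp add: wordW_append comp_assoc)
  have "rho n a = wordW n (rev [1..<a]) \<circ> s_theta n \<circ> transl (- eps 1)"
    using True by (simp add: rho_def wordAf_append wordAf_W wordAf_0 comp_assoc)
  also have "\<dots> = (wordW n (rev [1..<a]) \<circ> wordW n [1..<a]) \<circ> wordW n C \<circ> transl (- eps 1)"
    by (simp add: st comp_assoc)
  also have "\<dots> = vv n a \<circ> transl (- eps 1)"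
    using True n by (simp add: wordW_cancel vv_def C_def)
  finally show ?thesis .
next
  case False
  define m where "m = 2*n - a + 1"
  have m: "1 \<le> m" "m \<le> n" using False a by (auto simp: m_def)
  define A where "A = [m..<n] @ [n] @ rev [1..<n]"
  have up: "[1..<n] = [1..<m] @ [m..<n]" using m
    by (metis le_add_diff_inverse upt_add_eq_append)
  have B: "[1..<n] @ [n] @ rev [1..<n] = rev A @ rev [1..<m]"
    unfolding A_def by (subst (2) up) simp
  have A0: "0 \<notin> set A" using m by (auto simp: A_def)
  have "rho n a = wordAf n (A @ [0])"
    using False by (simp add: rho_def A_def m_def)
  also have "\<dots> = wordW n A \<circ> s_theta n \<circ> transl (- eps 1)"
    by (simp only: wordAf_append wordAf_W[OF A0] wordAf_0 comp_assoc)
  also have "\<dots> = (wordW n A \<circ> wordW n (rev A)) \<circ> wordW n (rev [1..<m]) \<circ> transl (- eps 1)"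
    unfolding s_theta_def B by (simp add: wordW_append comp_assoc)
  also have "\<dots> = vv n a \<circ> transl (- eps 1)"
    using False n a by (auto simp: wordW_cancel2 vv_def m_def)
  finally show ?thesis .
qed

definition VV :: "nat \<Rightarrow> nat list \<Rightarrow> vec \<Rightarrow> vec" where
  "VV n lam = foldr (\<circ>) (map (vv n) (rev lam)) id"
definition UU :: "nat \<Rightarrow> nat list \<Rightarrow> vec \<Rightarrow> vec" where
  "UU n lam = foldr (\<circ>) (map (\<lambda>i. inv (vv n i)) lam) id"

lemma vv_add: "vv n a (x + y) = vv n a x + vv n a y"
  by (simp add: vv_def wordW_add)

lemma VV_add: "VV n lam (x + y) = VV n lam x + VV n lam y"
  by (induction lam arbitrary: x y rule: rev_induct) (auto simp: VV_def vv_add)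

lemma VV_diff: "VV n lam (x - y) = VV n lam x - VV n lam y"
  using VV_add[of n lam "x - y" y] by (simp add: algebra_simps)

lemma wordW_surj: "1 \<le> n \<Longrightarrow> surj (wordW n xs)"
  using wordW_cancel2[of n xs] by (metis comp_apply id_apply surjI)

lemma vv_surj: "1 \<le> n \<Longrightarrow> surj (vv n a)"
  by (simp add: vv_def wordW_surj)

lemma foldr_comp_init: "foldr (\<circ>) fs g = foldr (\<circ>) fs id \<circ> g"
  by (induction fs) auto

lemma VV_UU: "1 \<le> n \<Longrightarrow> VV n lam (UU n lam x) = x"
proof (induction lam arbitrary: x rule: rev_induct)
  case (snoc a lam)
  have "VV n (lam @ [a]) (UU n (lam @ [a]) x) = vv n a (VV n lam (UU n lam (inv (vv n a) x)))"
    by (simp add: VV_def UU_def foldr_append foldr_comp_init[of _ "inv (vv n a)"])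
  also have "\<dots> = x" using snoc vv_surj[OF snoc.prems] by (simp add: surj_f_inv_f)
  finally show ?case .
qed (simp add: VV_def UU_def)

lemma main:
  assumes n: "1 \<le> n" and b: "\<forall>a\<in>set lam. 1 \<le> a \<and> a \<le> 2*n"
  shows "xlam n lam = VV n lam \<circ> transl (- (\<Sum>k < length lam. UU n (take k lam) (eps 1)))"
  using b
proof (induction lam rule: rev_induct)
  case Nil
  then show ?case by (simp add: xlam_def VV_def transl_def fun_eq_iff)
next
  case (snoc a lam)
  define S where "S = (\<Sum>k < length lam. UU n (take k lam) (eps 1))"
  have S: "(\<Sum>k < length (lam @ [a]). UU n (take k (lam @ [a])) (eps 1)) = S + UU n lam (eps 1)"
    by (simp add: S_def)
  have x: "xlam n (lam @ [a]) = rho n a \<circ> xlam n lam" by (simp add: xlam_def)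
  have r: "rho n a = vv n a \<circ> transl (- eps 1)" using snoc.prems rho_eq[OF n, of a] by simp
  have V: "VV n (lam @ [a]) = vv n a \<circ> VV n lam" by (simp add: VV_def)
  have IH: "xlam n lam = VV n lam \<circ> transl (- S)" 
  proof -
    have "\<forall>a\<in>set lam. 1 \<le> a \<and> a \<le> 2*n" using snoc.prems by simp
    from snoc.IH[OF this] show ?thesis by (simp only: S_def)
  qed
  have H: "VV n lam (y + - (S + UU n lam (eps 1))) = VV n lam (y + - S) + - eps 1" for y
    using VV_diff[of n lam "y - S" "UU n lam (eps 1)"] VV_UU[OF n]
    by (simp add: algebra_simps)
  then show ?case
    unfolding x S V r IH by (intro ext) (simp only: comp_apply transl_def H)
qed

theorem proposition3p2:
  fixes n :: nat and lam :: "nat list"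
  assumes "1 \<le> n" and "PC n lam" and "lam \<noteq> []"
  shows "xlam n lam =
           foldr (\<circ>) (map (vv n) (rev lam)) id
           \<circ> transl (- (\<Sum>k < length lam.
                  foldr (\<circ>) (map (\<lambda>i. inv (vv n i)) (take k lam)) id (eps 1)))"
proof -
  have "\<forall>a\<in>set lam. 1 \<le> a \<and> a \<le> 2*n" using assms(2)
    by (fastforce simp: PC_def in_set_conv_nth Suc_le_eq)
  from main[OF assms(1) this] show ?thesis by (simp add: VV_def UU_def)
qed

end
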